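(* Let $c>0$ be a real number which is not an integer. Then there exists a constant $L>0$ such that for all pairs of distinct primes $p,q>L$ we have $(p/q)^c\notin\mathbb Q$. *)

theory Defs
  imports Complex_Main "HOL-Computational_Algebra.Primes"
begin

end

theory Submission
  imports Defs "HOL-Computational_Algebra.Polynomial" "HOL-Library.FuncSet" "HOL-Real_Asymp.Real_Asymp"
begin

lemma pow_fact_le_exp:
  fixes x :: real assumes "x \<ge> 0"
  shows "x ^ n / fact n \<le> exp x"
proof -
  have s: "(\<lambda>n. x^n /\<^sub>R fact n) sums exp x" by (rule exp_converges)
  have "(\<Sum>i\<in>{n}. x^i /\<^sub>R fact i) \<le> (\<Sum>i. x^i /\<^sub>R fact i)"
    by (rule sum_le_suminf) (use s assms in \<open>auto simp: sums_iff\<close>)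
  then show ?thesis using s by (simp add: sums_iff divide_inverse mult.commute)
qed

lemma rolle_count:
  fixes f f' :: "real \<Rightarrow> real"
  assumes der: "\<And>x. (f has_real_derivative f' x) (at x)"
  shows "finite Z \<Longrightarrow> Z \<subseteq> {a..b} \<Longrightarrow> (\<forall>z\<in>Z. f z = 0) \<Longrightarrow>
    \<exists>Z'. finite Z' \<and> Z' \<subseteq> {a..b} \<and> (\<forall>z\<in>Z'. z < Max Z \<and> f' z = 0) \<and> card Z \<le> card Z' + 1"
proof (induction "card Z" arbitrary: Z)
  case 0
  then show ?case by (intro exI[of _ "{}"]) auto
next
  case (Suc n)
  define m where "m = Max Z"
  have ne: "Z \<noteq> {}" using Suc by auto
  have mZ: "m \<in> Z" using Suc.prems ne m_def by auto
  define Z0 where "Z0 = Z - {m}"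
  show ?case
  proof (cases "Z0 = {}")
    case True
    then have "Z = {m}" using mZ Z0_def by auto
    then show ?thesis by (intro exI[of _ "{}"]) auto
  next
    case False
    have cZ0: "n = card Z0" using Suc.hyps(2) mZ Suc.prems(1) by (simp add: Z0_def)
    obtain Z0' where Z0': "finite Z0'" "Z0' \<subseteq> {a..b}" "\<forall>z\<in>Z0'. z < Max Z0 \<and> f' z = 0"
      "card Z0 \<le> card Z0' + 1"
      using Suc.hyps(1)[OF cZ0] Suc.prems Z0_def by auto
    define m0 where "m0 = Max Z0"
    have m0Z0: "m0 \<in> Z0" using False Suc.prems(1) Z0_def m0_def Max_in[of Z0] by auto
    have "m0 \<le> m" using m0Z0 Suc.prems(1) m_def Z0_def by auto
    moreover have "m0 \<noteq> m" using m0Z0 Z0_def by auto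
    ultimately have lt: "m0 < m" by auto
    have cont: "continuous_on {m0..m} f"
      by (meson DERIV_isCont continuous_at_imp_continuous_on der)
    have dif: "\<And>x. f differentiable (at x)"
      using der real_differentiable_def by blast
    obtain \<xi> where xi: "m0 < \<xi>" "\<xi> < m" "(f has_real_derivative 0) (at \<xi>)"
      using Rolle[OF lt _ cont dif] m0Z0 mZ Suc.prems(3) Z0_def by auto
    have "f' \<xi> = 0" using DERIV_unique[OF der xi(3)] .
    moreover have "\<xi> \<notin> Z0'" using Z0' xi m0_def by force
    moreover have "a \<le> m0" "m \<le> b" using m0Z0 mZ Suc.prems(2) Z0_def by auto
    moreover have "Max Z = m" using m_def by simp
    moreover have "card Z = card Z0 + 1" using cZ0 Suc.hyps(2) by simp
    ultimately show ?thesis using Z0' xi lt m0_def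
      by (intro exI[of _ "insert \<xi> Z0'"]) fastforce
  qed
qed

lemma rolle_iter:
  fixes f :: "nat \<Rightarrow> real \<Rightarrow> real"
  assumes der: "\<And>i x. (f i has_real_derivative f (Suc i) x) (at x)"
   and Z: "finite Z" "Z \<subseteq> {a..b}" "\<forall>z\<in>Z. f 0 z = 0"
  shows "\<exists>Z'. finite Z' \<and> Z' \<subseteq> {a..b} \<and> (\<forall>z\<in>Z'. f m z = 0) \<and> card Z \<le> card Z' + m"
proof (induction m)
  case 0
  then show ?case using Z by auto
next
  case (Suc m)
  then obtain Z' where Z': "finite Z'" "Z' \<subseteq> {a..b}" "\<forall>z\<in>Z'. f m z = 0" "card Z \<le> card Z' + m"
    by auto
  obtain Z'' where "finite Z''" "Z'' \<subseteq> {a..b}" "\<forall>z\<in>Z''. f (Suc m) z = 0" "card Z' \<le> card Z'' + 1"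
    using rolle_count[OF der[of m], OF Z'(1,2,3)] by auto
  then show ?case using Z' by (intro exI[of _ Z'']) auto
qed

lemma pderiv_iter:
  fixes p :: "real poly"
  shows "degree p \<le> n \<Longrightarrow> (pderiv ^^ n) p = [:fact n * coeff p n:]"
proof (induction n arbitrary: p)
  case 0
  then show ?case by (simp add: degree_0_id)
next
  case (Suc n)
  have "degree (pderiv p) \<le> n" using Suc.prems by (simp add: degree_pderiv)
  then have "(pderiv ^^ n) (pderiv p) = [:fact n * coeff (pderiv p) n:]" by (rule Suc.IH)
  then show ?case by (simp add: funpow_Suc_right coeff_pderiv del: funpow.simps)
qed

lemma interp:
  fixes f :: "nat \<Rightarrow> real \<Rightarrow> real"
  assumes der: "\<And>i x. (f i has_real_derivative f (Suc i) x) (at x)"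
  and Z: "finite Z" "Z \<subseteq> {0..R}" "\<forall>z\<in>Z. f 0 z = 0" "card Z = M"
  and bd: "\<forall>t\<in>{0..R}. \<bar>f M t\<bar> \<le> Bd" and x: "x \<in> {0..R}"
  shows "\<bar>f 0 x\<bar> \<le> R ^ M / fact M * Bd"
proof (cases "x \<in> Z")
  case True
  have "0 \<le> Bd" using bd x by force
  moreover have "0 \<le> R" using x by auto
  ultimately show ?thesis using True Z by auto
next
  case False
  define P where "P = (\<Prod>z\<in>Z. [:-z, 1:])"
  have degP: "degree P = M" unfolding P_def
    by (subst degree_prod_eq_sum_degree) (auto simp: Z)
  have lcP: "coeff P M = 1" using degP lead_coeff_prod[of "\<lambda>z. [:-z, 1:]" Z]
    by (simp add: P_def)
  have polyP: "\<And>t. poly P t = (\<Prod>z\<in>Z. t - z)" by (simp add: P_def poly_prod)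
  have Px: "poly P x \<noteq> 0" using False Z(1) by (simp add: polyP)
  define C where "C = f 0 x / poly P x"
  define g where "g = (\<lambda>i t. f i t - C * poly ((pderiv ^^ i) P) t)"
  have derg: "\<And>i t. (g i has_real_derivative g (Suc i) t) (at t)"
    unfolding g_def by (auto intro!: derivative_eq_intros der)
  have g0: "\<forall>z\<in>insert x Z. g 0 z = 0"
  proof
    fix z assume "z \<in> insert x Z"
    then show "g 0 z = 0"
    proof
      assume "z = x" then show ?thesis using Px by (simp add: g_def C_def)
    next
      assume zZ: "z \<in> Z"
      have "poly P z = 0" unfolding polyP using zZ Z(1) by (auto intro: prod_zero)
      then show ?thesis using Z zZ by (simp add: g_def)
    qed
  qed
  obtain Z' where Z': "finite Z'" "Z' \<subseteq> {0..R}" "\<forall>z\<in>Z'. g M z = 0" "card (insert x Z) \<le> card Z' + M"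
    using rolle_iter[of g, OF derg, of "insert x Z" 0 R M] g0 Z x by auto
  have "card (insert x Z) = M + 1" using False Z by simp
  then have "Z' \<noteq> {}" using Z' by auto
  then obtain \<xi> where xi: "\<xi> \<in> Z'" by auto
  have "(pderiv ^^ M) P = [:fact M:]" using pderiv_iter[of P M] degP lcP by simp
  then have "f M \<xi> = C * fact M" using Z'(3) xi by (simp add: g_def)
  then have fx: "f 0 x = f M \<xi> * poly P x / fact M" using Px by (simp add: C_def field_simps)
  have "\<bar>poly P x\<bar> \<le> R ^ M" unfolding polyP abs_prod
  proof -
    have "(\<Prod>z\<in>Z. \<bar>x - z\<bar>) \<le> (\<Prod>z\<in>Z. R)"
      by (rule prod_mono) (use Z x in \<open>force simp: abs_le_iff subset_iff\<close>)
    then show "(\<Prod>z\<in>Z. \<bar>x - z\<bar>) \<le> R ^ M" using Z by simp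
  qed
  moreover have "\<bar>f M \<xi>\<bar> \<le> Bd" using bd xi Z' by auto
  ultimately have "\<bar>f M \<xi>\<bar> * \<bar>poly P x\<bar> \<le> Bd * R ^ M"
    by (meson abs_ge_zero mult_mono' order_trans)
  then show ?thesis unfolding fx by (simp add: abs_mult field_simps)
qed

lemma exp_zeros:
  fixes a lam :: "'i \<Rightarrow> real"
  shows "finite I \<Longrightarrow> inj_on lam I \<Longrightarrow> (\<exists>i\<in>I. a i \<noteq> 0) \<Longrightarrow> finite Z \<Longrightarrow>
    (\<forall>z\<in>Z. (\<Sum>i\<in>I. a i * exp (lam i * z)) = 0) \<Longrightarrow> card Z < card I"
proof (induction "card I" arbitrary: I a lam Z)
  case 0
  then show ?case by auto
next
  case (Suc n)
  obtain i0 where i0: "i0 \<in> I" using Suc.prems by auto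
  define I' where "I' = I - {i0}"
  have cI': "card I' = n" using Suc.hyps(2) i0 Suc.prems(1) by (simp add: I'_def)
  have fI': "finite I'" using Suc.prems(1) by (simp add: I'_def)
  show ?case
  proof (cases "\<forall>i\<in>I'. a i = 0")
    case True
    then have ai0: "a i0 \<noteq> 0" using Suc.prems(3) I'_def by auto
    have "Z = {}"
    proof (rule ccontr)
      assume "Z \<noteq> {}"
      then obtain z where z: "z \<in> Z" by auto
      have "(\<Sum>i\<in>I. a i * exp (lam i * z)) = a i0 * exp (lam i0 * z) + (\<Sum>i\<in>I'. a i * exp (lam i * z))"
        using i0 Suc.prems(1) by (simp add: I'_def sum.remove)
      also have "(\<Sum>i\<in>I'. a i * exp (lam i * z)) = 0" using True by simp
      finally show False using Suc.prems(5) z ai0 by simp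
    qed
    then show ?thesis using Suc.hyps(2) by simp
  next
    case False
    then obtain i1 where i1: "i1 \<in> I'" "a i1 \<noteq> 0" by auto
    define g where "g = (\<lambda>z. \<Sum>i\<in>I. a i * exp ((lam i - lam i0) * z))"
    define g' where "g' = (\<lambda>z. \<Sum>i\<in>I. a i * (lam i - lam i0) * exp ((lam i - lam i0) * z))"
    have derg: "\<And>z. (g has_real_derivative g' z) (at z)"
      unfolding g_def g'_def
      by (auto intro!: derivative_eq_intros DERIV_sum simp: algebra_simps)
    have gZ: "\<forall>z\<in>Z. g z = 0"
    proof
      fix z assume z: "z \<in> Z"
      have "g z = exp (- lam i0 * z) * (\<Sum>i\<in>I. a i * exp (lam i * z))"
        unfolding g_def sum_distrib_left
        by (rule sum.cong) (auto simp: algebra_simps simp flip: exp_add)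
      then show "g z = 0" using Suc.prems(5) z by simp
    qed
    show ?thesis
    proof (cases "Z = {}")
      case True
      then show ?thesis using Suc.hyps(2) by simp
    next
      case Zne: False
      obtain Z' where Z': "finite Z'" "\<forall>z\<in>Z'. g' z = 0" "card Z \<le> card Z' + 1"
        proof -
        have "Z \<subseteq> {Min Z..Max Z}" using Suc.prems(4) by (auto simp: Min_le Max_ge)
        then show thesis using rolle_count[OF derg, of Z "Min Z" "Max Z"] Suc.prems(4) gZ that by blast
      qed
      have g'eq: "g' z = (\<Sum>i\<in>I'. (a i * (lam i - lam i0)) * exp ((lam i - lam i0) * z))" for z
        unfolding g'_def using i0 Suc.prems(1) by (simp add: I'_def sum.remove)
      have inj': "inj_on (\<lambda>i. lam i - lam i0) I'"
        using Suc.prems(2) by (auto simp: inj_on_def I'_def)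
      have "lam i1 \<noteq> lam i0" using Suc.prems(2) i1 i0 by (auto simp: inj_on_def I'_def)
      then have nz: "\<exists>i\<in>I'. a i * (lam i - lam i0) \<noteq> 0" using i1 by auto
      have "card Z' < card I'"
        by (rule Suc.hyps(1)[OF cI'[symmetric] fI' inj' nz Z'(1)]) (use Z'(2) g'eq in auto)
      then show ?thesis using Z'(3) cI' Suc.hyps(2) by simp
    qed
  qed
qed

lemma siegel:
  fixes b :: "'j \<Rightarrow> 'i \<Rightarrow> int" and B :: int
  assumes I: "finite I" "I \<noteq> {}" and J: "finite J" and cIJ: "2 * card J \<le> card I"
    and bB: "\<forall>j\<in>J. \<forall>i\<in>I. \<bar>b j i\<bar> \<le> B" and B: "B \<ge> 1"
  shows "\<exists>x. (\<exists>i\<in>I. x i \<noteq> 0) \<and> (\<forall>i\<in>I. \<bar>x i\<bar> \<le> 2 * int (card I) * B) \<and>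
             (\<forall>j\<in>J. (\<Sum>i\<in>I. b j i * x i) = 0)"
proof -
  define nI where "nI = card I"
  define nJ where "nJ = card J"
  have nI1: "nI \<ge> 1" using I by (simp add: nI_def Suc_le_eq card_gt_0_iff)
  define X where "X = 2 * int nI * B"
  have X1: "X \<ge> 1" proof -
    have "int nI \<ge> 1" using nI1 by simp
    then have "int nI * B \<ge> 1 * 1" using B by (intro mult_mono) auto
    then show ?thesis by (simp add: X_def)
  qed
  define D where "D = PiE I (\<lambda>_. {0..X})"
  define Y where "Y = int nI * B * X"
  define T where "T = PiE J (\<lambda>_. {-Y..Y})"
  define \<phi> where "\<phi> = (\<lambda>x. restrict (\<lambda>j. \<Sum>i\<in>I. b j i * x i) J)"
  have cD: "card D = nat (X + 1) ^ nI" using I by (simp add: D_def card_PiE nI_def)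
  have cT: "card T = nat (2 * Y + 1) ^ nJ" using J by (simp add: T_def card_PiE nJ_def)
  have im: "\<phi> ` D \<subseteq> T"
  proof
    fix y assume "y \<in> \<phi> ` D"
    then obtain x where x: "x \<in> D" "y = \<phi> x" by auto
    have "\<bar>\<Sum>i\<in>I. b j i * x i\<bar> \<le> Y" if j: "j \<in> J" for j
    proof -
      have "\<bar>\<Sum>i\<in>I. b j i * x i\<bar> \<le> (\<Sum>i\<in>I. \<bar>b j i * x i\<bar>)" by (rule sum_abs)
      also have "\<dots> \<le> (\<Sum>i\<in>I. B * X)"
      proof (rule sum_mono)
        fix i assume i: "i \<in> I"
        have "\<bar>x i\<bar> \<le> X" "0 \<le> x i" using x i by (auto simp: D_def PiE_iff)
        then show "\<bar>b j i * x i\<bar> \<le> B * X" using bB j i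
          by (simp add: abs_mult mult_mono')
      qed
      also have "\<dots> = Y" by (simp add: Y_def nI_def)
      finally show ?thesis .
    qed
    then show "y \<in> T" using x by (fastforce simp: T_def \<phi>_def PiE_iff abs_le_iff)
  qed
  have "card T < card D"
  proof -
    have Y2: "2 * Y + 1 = X * X + 1" by (simp add: X_def Y_def algebra_simps)
    have "nat (2 * Y + 1) < nat (X + 1) ^ 2"
      proof -
      have "X * X + 1 < (X + 1) * (X + 1)" using X1 by (simp add: algebra_simps)
      then have "nat (X * X + 1) < nat ((X + 1) * (X + 1))" using X1 by (simp add: nat_less_eq_zless)
      also have "nat ((X + 1) * (X + 1)) = nat (X + 1) ^ 2" using X1 by (simp add: power2_eq_square nat_mult_distrib)
      finally show ?thesis unfolding Y2 .
    qed
    show ?thesis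
    proof (cases "nJ = 0")
      case True
      have "1 < nat (X + 1) ^ nI" proof -
        have "1 < nat (X + 1)" using X1 by simp
        then show ?thesis using nI1 by (intro one_less_power) auto
      qed
      then show ?thesis using True cT cD by simp
    next
      case False
      have "nat (2 * Y + 1) ^ nJ < (nat (X + 1) ^ 2) ^ nJ"
        by (rule power_strict_mono) (use \<open>nat (2 * Y + 1) < nat (X + 1) ^ 2\<close> False in auto)
      also have "\<dots> = nat (X + 1) ^ (2 * nJ)" by (simp add: power_mult)
      also have "\<dots> \<le> nat (X + 1) ^ nI"
        by (rule power_increasing) (use cIJ X1 in \<open>auto simp: nI_def nJ_def\<close>)
      finally show ?thesis using cT cD by simp
    qed
  qed
  then have "\<not> inj_on \<phi> D"
    using card_inj_on_le[of \<phi> D T] im J unfolding T_def by (auto intro!: finite_PiE)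
  then obtain x y where xy: "x \<in> D" "y \<in> D" "x \<noteq> y" "\<phi> x = \<phi> y" by (auto simp: inj_on_def)
  obtain i where i: "i \<in> I" "x i \<noteq> y i"
    using xy(1,2,3) unfolding D_def by (metis PiE_ext)
  show ?thesis
  proof (intro exI[of _ "\<lambda>i. x i - y i"] conjI)
    show "\<exists>i\<in>I. x i - y i \<noteq> 0" using i by auto
    show "\<forall>i\<in>I. \<bar>x i - y i\<bar> \<le> 2 * int (card I) * B"
      proof
      fix i assume "i \<in> I"
      then have "0 \<le> x i" "x i \<le> X" "0 \<le> y i" "y i \<le> X" using xy(1,2) by (auto simp: D_def PiE_iff)
      then show "\<bar>x i - y i\<bar> \<le> 2 * int (card I) * B" by (simp add: X_def nI_def abs_le_iff)
    qed
    show "\<forall>j\<in>J. (\<Sum>i\<in>I. b j i * (x i - y i)) = 0"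
    proof
      fix j assume j: "j \<in> J"
      have "(\<Sum>i\<in>I. b j i * x i) = (\<Sum>i\<in>I. b j i * y i)"
        using fun_cong[OF xy(4), of j] j by (simp add: \<phi>_def)
      then show "(\<Sum>i\<in>I. b j i * (x i - y i)) = 0"
        by (simp add: right_diff_distrib sum_subtractf)
    qed
  qed
qed

lemma nat_pow_exp: "H > 0 \<Longrightarrow> real H ^ m = exp (real m * ln (real H))"
  by (simp add: exp_of_nat_mult)

lemma big_ineq:
  fixes c :: real and n H :: nat
  assumes n: "n \<ge> 1" and H: "H \<ge> 2" and c: "c > 0"
  and E: "72 * real n^5 * ln (real H) + real n^6 + real n^6 * (ln (12*(1+c)*ln (real H)) - ln (real n))
     + ln 32 + 12 * ln (real n) + 12*(1+c)*ln (real H)*real n^5 < 0"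
  shows "real H ^ (12 * (2*n^3) * (2*n^2)) * ((3 * real (2*n^2) * ln (real H)) ^ (n^6) / fact (n^6) *
     (real ((2*n^3)^2) * (2 * real ((2*n^3)^2) * real H ^ (12 * (2*n^3) * n^2)) *
      (real (2*n^3) * (1 + c)) ^ (n^6) * exp (real (2*n^3) * (1 + c) * (3 * real (2*n^2) * ln (real H))))) < 1"
proof -
  define L where "L = ln (real H)"
  have L: "L > 0" using H by (simp add: L_def)
  have n0: "real n > 0" using n by simp
  have p5: "real n ^3 * real n^2 = real n^5" by (simp add: power_add[symmetric])
  have p6: "real n ^6 = real n^5 * real n" using power_add[of "real n" 5 1] by simp
  have e1: "real H ^ (12 * (2*n^3) * (2*n^2)) = exp (48 * real n^5 * L)"
  proof -
    have "real H ^ (12 * (2*n^3) * (2*n^2)) = exp (real (12 * (2*n^3) * (2*n^2)) * L)"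
      unfolding L_def by (rule nat_pow_exp) (use H in simp)
    also have "real (12 * (2*n^3) * (2*n^2)) = 48 * real n^5" using p5 by simp
    finally show ?thesis .
  qed
  have e2: "real H ^ (12 * (2*n^3) * n^2) = exp (24 * real n^5 * L)"
  proof -
    have "real H ^ (12 * (2*n^3) * n^2) = exp (real (12 * (2*n^3) * n^2) * L)"
      unfolding L_def by (rule nat_pow_exp) (use H in simp)
    also have "real (12 * (2*n^3) * n^2) = 24 * real n^5" using p5 by simp
    finally show ?thesis .
  qed
  have e3: "exp (real (2*n^3) * (1 + c) * (3 * real (2*n^2) * ln (real H))) = exp (12*(1+c)*L*real n^5)"
    using p5 by (simp add: L_def algebra_simps)
  define X where "X = 12*(1+c)*L*real n^5"
  have X0: "X > 0" using L c n0 by (simp add: X_def)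
  have e4: "(3 * real (2*n^2) * ln (real H)) ^ (n^6) * (real (2*n^3) * (1 + c)) ^ (n^6) = X ^ (n^6)"
  proof -
    have "(3 * real (2*n^2) * ln (real H)) * (real (2*n^3) * (1 + c)) = X"
      using p5 by (simp add: X_def L_def algebra_simps)
    then show ?thesis by (simp flip: power_mult_distrib)
  qed
  have e5: "real ((2*n^3)^2) * (2 * real ((2*n^3)^2)) = exp (ln 32 + 12 * ln (real n))"
  proof -
    have "exp (ln 32 + 12 * ln (real n)) = 32 * real n ^ 12"
      using n0 by (simp add: exp_add exp_of_nat_mult[of 12, simplified])
    moreover have "real ((2*n^3)^2) * (2 * real ((2*n^3)^2)) = 32 * real n ^ 12"
      by (simp add: power_mult_distrib power_mult[symmetric] power_add[symmetric])
    ultimately show ?thesis by simp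
  qed
  have M0: "real (n^6) > 0" using n0 by simp
  have e6: "X ^ (n^6) / fact (n^6) \<le> exp (real n^6 + real n^6 * (ln (12*(1+c)*L) - ln (real n)))"
  proof -
    have "X ^ (n^6) / fact (n^6) = (X / real (n^6)) ^ (n^6) * (real (n^6) ^ (n^6) / fact (n^6))"
      using M0 by (simp add: power_divide)
    also have "\<dots> \<le> (X / real (n^6)) ^ (n^6) * exp (real (n^6))"
      by (rule mult_left_mono) (use X0 M0 pow_fact_le_exp[of "real (n^6)" "n^6"] in auto)
    also have "X / real (n^6) = 12*(1+c)*L / real n"
      using n0 unfolding of_nat_power p6 by (simp add: X_def field_simps)
    also have "(12*(1+c)*L / real n) ^ (n^6) = exp (real (n^6) * (ln (12*(1+c)*L) - ln (real n)))"
      using n0 L c by (subst exp_of_nat_mult) (simp add: exp_diff)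
    finally have "X ^ (n^6) / fact (n^6) \<le> exp (real (n^6) * (ln (12*(1+c)*L) - ln (real n))) * exp (real (n^6))" .
    also have "\<dots> = exp (real n^6 + real n^6 * (ln (12*(1+c)*L) - ln (real n)))"
      by (simp add: exp_add)
    finally show ?thesis .
  qed
  have "real H ^ (12 * (2*n^3) * (2*n^2)) * ((3 * real (2*n^2) * ln (real H)) ^ (n^6) / fact (n^6) *
     (real ((2*n^3)^2) * (2 * real ((2*n^3)^2) * real H ^ (12 * (2*n^3) * n^2)) *
      (real (2*n^3) * (1 + c)) ^ (n^6) * exp (real (2*n^3) * (1 + c) * (3 * real (2*n^2) * ln (real H)))))
    = exp (48 * real n^5 * L) * exp (24 * real n^5 * L) * exp (ln 32 + 12 * ln (real n)) *
      exp (12*(1+c)*L*real n^5) * (X ^ (n^6) / fact (n^6))"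
    unfolding e1 e2 e3 e4[symmetric] e5[symmetric] by (simp add: divide_inverse mult_ac)
  also have "\<dots> \<le> exp (48 * real n^5 * L) * exp (24 * real n^5 * L) * exp (ln 32 + 12 * ln (real n)) *
      exp (12*(1+c)*L*real n^5) * exp (real n^6 + real n^6 * (ln (12*(1+c)*L) - ln (real n)))"
    by (rule mult_left_mono[OF e6]) simp
  also have "\<dots> = exp (48 * real n^5 * L + 24 * real n^5 * L + (ln 32 + 12 * ln (real n)) +
      12*(1+c)*L*real n^5 + (real n^6 + real n^6 * (ln (12*(1+c)*L) - ln (real n))))"
    by (simp only: exp_add)
  also have "\<dots> = exp (72 * real n^5 * L + real n^6 + real n^6 * (ln (12*(1+c)*L) - ln (real n))
     + ln 32 + 12 * ln (real n) + 12*(1+c)*L*real n^5)"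
    by (rule arg_cong[where f=exp]) (simp add: algebra_simps)
  also have "\<dots> < 1" using E by (simp add: L_def)
  finally show ?thesis .
qed

lemma asym:
  fixes L c :: real assumes "L > 0" "c > 0"
  shows "\<exists>n::nat. n \<ge> 1 \<and> 72 * real n^5 * L + real n^6 + real n^6 * (ln (12*(1+c)*L) - ln (real n))
     + ln 32 + 12 * ln (real n) + 12*(1+c)*L*real n^5 < 0"
proof -
  define E where "E = (\<lambda>x::real. 72 * x^5 * L + x^6 + x^6 * (ln (12*(1+c)*L) - ln x)
     + ln 32 + 12 * ln x + 12*(1+c)*L*x^5)"
  have "filterlim (\<lambda>x. - E x) at_top at_top" unfolding E_def by real_asymp
  then have "eventually (\<lambda>x. - E x > 0) at_top" by (simp add: filterlim_at_top_dense) (metis (mono_tags, lifting) eventually_mono neg_0_less_iff_less)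
  then have "eventually (\<lambda>n. - E (real n) > 0) sequentially"
    using eventually_compose_filterlim filterlim_real_sequentially by blast
  then obtain N where N: "\<And>n. n \<ge> N \<Longrightarrow> E (real n) < 0" by (auto simp: eventually_sequentially)
  show ?thesis using N[of "max N 1"] unfolding E_def by (intro exI[of _ "max N 1"]) auto
qed

lemma pow_le_pow_bound:
  fixes x H :: nat assumes "x \<le> H" "H \<ge> 1" "e \<le> E"
  shows "x ^ e \<le> H ^ E"
  by (meson assms order_trans power_increasing power_mono zero_le)

lemma core:
  fixes c :: real and P Q U V :: "nat \<Rightarrow> nat"
  assumes c: "c > 0" "c \<notin> \<rat>"
  and PQ: "\<And>j. j < 3 \<Longrightarrow> 0 < Q j \<and> Q j < P j"
  and UV: "\<And>j. j < 3 \<Longrightarrow> 0 < U j \<and> 0 < V j \<and> (real (P j) / real (Q j)) powr c = real (U j) / real (V j)"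
  and indep: "inj_on (\<lambda>s. \<Sum>j<3. real (s j) * ln (real (P j) / real (Q j))) ({..<3} \<rightarrow>\<^sub>E UNIV)"
  shows False
proof -
  define \<alpha> where "\<alpha> j = real (P j) / real (Q j)" for j
  define \<beta> where "\<beta> j = real (U j) / real (V j)" for j
  define y where "y j = ln (\<alpha> j)" for j
  define H :: nat where "H = 2 + (\<Sum>j<3. P j + Q j + U j + V j)"
  have H2: "H \<ge> 2" by (simp add: H_def)
  have Hb: "P j \<le> H \<and> Q j \<le> H \<and> U j \<le> H \<and> V j \<le> H" if "j < 3" for j
  proof -
    have "P j + Q j + U j + V j \<le> (\<Sum>j<3. P j + Q j + U j + V j)"
      by (rule member_le_sum) (use that in auto)
    then show ?thesis by (simp add: H_def)
  qed
  define L where "L = ln (real H)"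
  have L0: "L > 0" using H2 by (simp add: L_def)
  have apos: "\<alpha> j > 1" if "j < 3" for j using PQ[OF that] by (simp add: \<alpha>_def)
  have y0: "y j > 0" if "j < 3" for j using apos[OF that] by (simp add: y_def)
  have yL: "y j \<le> L" if "j < 3" for j
  proof -
    have "\<alpha> j \<le> real (P j)" using PQ[OF that] by (simp add: \<alpha>_def divide_le_eq)
    also have "\<dots> \<le> real H" using Hb[OF that] by simp
    finally show ?thesis using apos[OF that] by (simp add: y_def L_def)
  qed
  have expy: "exp (y j) = \<alpha> j" if "j < 3" for j using apos[OF that] by (simp add: y_def)
  have expcy: "exp (c * y j) = \<beta> j" if "j < 3" for j
    using UV[OF that] PQ[OF that] by (simp add: y_def \<beta>_def \<alpha>_def powr_def)
  obtain n where n: "n \<ge> 1" and E: "72 * real n^5 * L + real n^6 + real n^6 * (ln (12*(1+c)*L) - ln (real n))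
     + ln 32 + 12 * ln (real n) + 12*(1+c)*L*real n^5 < 0"
    using asym[OF L0 c(1)] by auto
  define K where "K = 2 * n^3"
  define S0 where "S0 = n^2"
  define S1 where "S1 = 2 * n^2"
  define M where "M = n^6"
  define I where "I = {..<K} \<times> {..<K}"
  define box where "box S = {..<3::nat} \<rightarrow>\<^sub>E {..<S::nat}" for S
  define \<zeta> where "\<zeta> s = (\<Sum>j<3. real (s j) * y j)" for s :: "nat \<Rightarrow> nat"
  define lam where "lam = (\<lambda>(k::nat, l::nat). real k + real l * c)"
  define dn where "dn s = (\<Prod>j<3. Q j ^ ((K-1) * s j) * V j ^ ((K-1) * s j))" for s :: "nat \<Rightarrow> nat"
  define bco where "bco s = (\<lambda>(k, l). \<Prod>j<3. P j ^ (k * s j) * Q j ^ ((K-1-k) * s j) * U j ^ (l * s j) * V j ^ ((K-1-l) * s j))" for s :: "nat \<Rightarrow> nat"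
  have K1: "K \<ge> 1" using n by (simp add: K_def)
  have cardI: "card I = K^2" by (simp add: I_def power2_eq_square)
  have fI: "finite I" by (simp add: I_def)
  have cardbox: "card (box S) = S^3" for S by (simp add: box_def card_PiE)
  have fbox: "finite (box S)" for S by (simp add: box_def finite_PiE)
  have inj\<zeta>: "inj_on \<zeta> (box S)" for S
  proof -
    have "inj_on \<zeta> ({..<3} \<rightarrow>\<^sub>E UNIV)" proof -
      have "\<zeta> = (\<lambda>s. \<Sum>j<3. real (s j) * ln (real (P j) / real (Q j)))"
        by (rule ext) (simp add: \<zeta>_def y_def \<alpha>_def)
      then show ?thesis using indep by simp
    qed
    moreover have "box S \<subseteq> {..<3} \<rightarrow>\<^sub>E UNIV" by (auto simp: box_def PiE_iff)
    ultimately show ?thesis by (rule inj_on_subset)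
  qed
  have \<zeta>range: "0 \<le> \<zeta> s \<and> \<zeta> s \<le> 3 * real S * L" if "s \<in> box S" for s S
  proof -
    have "\<zeta> s \<le> (\<Sum>j<(3::nat). real S * L)" unfolding \<zeta>_def
    proof (rule sum_mono)
      fix j :: nat assume j: "j \<in> {..<3}"
      have "s j < S" using that j by (auto simp: box_def PiE_iff)
      then show "real (s j) * y j \<le> real S * L"
        using y0[of j] yL[of j] j L0 by (intro mult_mono) auto
    qed
    moreover have "0 \<le> \<zeta> s" unfolding \<zeta>_def by (rule sum_nonneg) (use y0 in \<open>simp add: less_imp_le\<close>)
    ultimately show ?thesis by simp
  qed
  have key1: "real (bco s (k, l)) = real (dn s) * exp (lam (k, l) * \<zeta> s)" if kK: "k < K" and lK: "l < K" for s k l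
  proof -
    have "exp (lam (k, l) * \<zeta> s) = (\<Prod>j<3. \<alpha> j ^ (k * s j) * \<beta> j ^ (l * s j))"
      unfolding \<zeta>_def sum_distrib_left exp_sum[OF finite_lessThan]
    proof (rule prod.cong[OF refl])
      fix j :: nat assume "j \<in> {..<3}"
      then have j: "j < 3" by simp
      have "lam (k, l) * (real (s j) * y j) = real (k * s j) * y j + real (l * s j) * (c * y j)"
        by (simp add: lam_def algebra_simps)
      then show "exp (lam (k, l) * (real (s j) * y j)) = \<alpha> j ^ (k * s j) * \<beta> j ^ (l * s j)"
      proof -
        have a1: "exp (real (k * s j) * y j) = \<alpha> j ^ (k * s j)" by (simp only: exp_of_nat_mult expy[OF j])
        have a2: "exp (real (l * s j) * (c * y j)) = \<beta> j ^ (l * s j)" by (simp only: exp_of_nat_mult expcy[OF j])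
        show ?thesis unfolding \<open>lam (k, l) * (real (s j) * y j) = _\<close> exp_add a1 a2 ..
      qed
    qed
    moreover have "real (P j ^ (k * s j) * Q j ^ ((K-1-k) * s j) * U j ^ (l * s j) * V j ^ ((K-1-l) * s j)) =
       real (Q j ^ ((K-1) * s j) * V j ^ ((K-1) * s j)) * (\<alpha> j ^ (k * s j) * \<beta> j ^ (l * s j))"
      if j: "j < 3" for j
    proof -
      have q: "real (Q j) \<noteq> 0" "real (V j) \<noteq> 0" using PQ[OF j] UV[OF j] by auto
      have e1: "(K-1) * s j = k * s j + (K-1-k) * s j" using kK by (simp add: add_mult_distrib[symmetric])
      have e2: "(K-1) * s j = l * s j + (K-1-l) * s j" using lK by (simp add: add_mult_distrib[symmetric])
      have "real (Q j) ^ ((K-1) * s j) * real (V j) ^ ((K-1) * s j) * (\<alpha> j ^ (k * s j) * \<beta> j ^ (l * s j))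
         = real (Q j) ^ ((K-1) * s j) * real (V j) ^ ((K-1) * s j) * (real (P j) ^ (k * s j) / real (Q j) ^ (k * s j) * (real (U j) ^ (l * s j) / real (V j) ^ (l * s j)))"
        by (simp add: \<alpha>_def \<beta>_def power_divide)
      also have "\<dots> = real (P j) ^ (k * s j) * real (Q j) ^ ((K-1-k) * s j) * real (U j) ^ (l * s j) * real (V j) ^ ((K-1-l) * s j)"
        apply (subst (1) e1, subst e2) using q by (simp add: power_add field_simps)
      finally show ?thesis by simp
    qed
    ultimately show ?thesis
      by (simp add: bco_def dn_def prod.distrib[symmetric] del: of_nat_mult of_nat_power)
  qed
  have sbound: "e * s j \<le> K * S" if "s \<in> box S" "j < 3" "e \<le> K" for s S j e
  proof -
    have "s j < S" using that by (auto simp: box_def PiE_iff)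
    then show ?thesis using that(3) by (intro mult_le_mono) auto
  qed
  have H1: "H \<ge> 1" using H2 by simp
  have key2: "bco s (k, l) \<le> H ^ (12 * K * S)" if s: "s \<in> box S" and kl: "k < K" "l < K" for s S k l
  proof -
    have "bco s (k, l) \<le> (\<Prod>j<(3::nat). H ^ (K * S) * H ^ (K * S) * H ^ (K * S) * H ^ (K * S))"
      unfolding bco_def split
    proof (rule prod_mono, intro conjI)
      fix j :: nat assume "j \<in> {..<3}"
      then have j: "j < 3" by simp
      have sjS: "s j \<le> S" using s j by (auto simp: box_def PiE_iff less_imp_le)
      show "P j ^ (k * s j) * Q j ^ ((K-1-k) * s j) * U j ^ (l * s j) * V j ^ ((K-1-l) * s j)
          \<le> H ^ (K * S) * H ^ (K * S) * H ^ (K * S) * H ^ (K * S)"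
        using sjS Hb[OF j] H1 sbound[OF s j, of k] sbound[OF s j, of "K-1-k"] sbound[OF s j, of l] sbound[OF s j, of "K-1-l"] kl
        by (intro mult_mono pow_le_pow_bound) auto
    qed simp
    also have "\<dots> = H ^ (12 * K * S)"
      by (simp add: power_add[symmetric] power_mult[symmetric] ac_simps)
    finally show ?thesis .
  qed
  have key3: "dn s \<le> H ^ (12 * K * S)" if s: "s \<in> box S" for s S
  proof -
    have "dn s \<le> (\<Prod>j<(3::nat). H ^ (K * S) * H ^ (K * S))"
      unfolding dn_def
    proof (rule prod_mono, intro conjI)
      fix j :: nat assume "j \<in> {..<3}"
      then have j: "j < 3" by simp
      have sjS: "s j \<le> S" using s j by (auto simp: box_def PiE_iff less_imp_le)
      show "Q j ^ ((K-1) * s j) * V j ^ ((K-1) * s j) \<le> H ^ (K * S) * H ^ (K * S)"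
        using sjS Hb[OF j] H1 sbound[OF s j, of "K-1"]
        by (intro mult_mono pow_le_pow_bound) auto
    qed simp
    also have "\<dots> = H ^ (6 * K * S)"
      by (simp add: power_add[symmetric] power_mult[symmetric] ac_simps)
    also have "\<dots> \<le> H ^ (12 * K * S)" using H1 by (intro power_increasing) auto
    finally show ?thesis .
  qed
  have dnpos: "dn s > 0" for s using PQ UV by (simp add: dn_def)
  have Ine: "I \<noteq> {}" using K1 by (auto simp: I_def lessThan_empty_iff)
  have cIJ: "2 * card (box S0) \<le> card I"
    unfolding cardI cardbox K_def S0_def by (simp add: power_mult_distrib power_mult[symmetric])
  obtain a where a_nz: "\<exists>i\<in>I. a i \<noteq> 0"
    and a_bd: "\<forall>i\<in>I. \<bar>a i\<bar> \<le> 2 * int (card I) * int (H ^ (12 * K * S0))"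
    and a_eq: "\<forall>s\<in>box S0. (\<Sum>i\<in>I. int (bco s i) * a i) = 0"
  proof -
    have "\<forall>s\<in>box S0. \<forall>i\<in>I. \<bar>int (bco s i)\<bar> \<le> int (H ^ (12 * K * S0))"
      using key2 by (auto simp: I_def)
    moreover have "int (H ^ (12 * K * S0)) \<ge> 1" using H1 by simp
    ultimately show thesis
      using siegel[OF fI Ine fbox cIJ, of "\<lambda>s i. int (bco s i)" "int (H ^ (12 * K * S0))"] that by blast
  qed
  define f where "f i x = (\<Sum>q\<in>I. real_of_int (a q) * lam q ^ i * exp (lam q * x))" for i x
  have der: "(f i has_real_derivative f (Suc i) x) (at x)" for i x
    unfolding f_def by (auto intro!: derivative_eq_intros DERIV_sum simp: algebra_simps)
  have intval: "real (dn s) * f 0 (\<zeta> s) = real_of_int (\<Sum>q\<in>I. int (bco s q) * a q)" for s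
  proof -
    have "real (dn s) * f 0 (\<zeta> s) = (\<Sum>q\<in>I. real (bco s q) * real_of_int (a q))"
      unfolding f_def sum_distrib_left
    proof (rule sum.cong[OF refl])
      fix q assume "q \<in> I"
      then obtain k l where q: "q = (k, l)" "k < K" "l < K" by (auto simp: I_def)
      show "real (dn s) * (real_of_int (a q) * lam q ^ 0 * exp (lam q * \<zeta> s)) = real (bco s q) * real_of_int (a q)"
        unfolding q(1) key1[OF q(2,3)] by simp
    qed
    then show ?thesis by simp
  qed
  define R where "R = 3 * real S1 * L"
  define W where "W = real K * (1 + c)"
  define A where "A = 2 * real (card I) * real H ^ (12 * K * S0)"
  define Bd where "Bd = real (card I) * A * W ^ M * exp (W * R)"
  have lamb: "0 \<le> lam q \<and> lam q \<le> W" if qI: "q \<in> I" for q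
  proof -
    obtain k l where q: "q = (k, l)" "k < K" "l < K" using qI by (auto simp: I_def)
    have "real l * c \<le> real K * c" using q c by (intro mult_right_mono) auto
    moreover have "real k \<le> real K" using q by simp
    moreover have "lam q = real k + real l * c" by (simp add: q lam_def)
    moreover have "W = real K + real K * c" by (simp add: W_def algebra_simps)
    moreover have "0 \<le> real l * c" using c by simp
    ultimately show ?thesis by linarith
  qed
  have aA: "\<bar>real_of_int (a q)\<bar> \<le> A" if "q \<in> I" for q
  proof -
    have "real_of_int \<bar>a q\<bar> \<le> real_of_int (2 * int (card I) * int (H ^ (12 * K * S0)))"
      using a_bd that by (intro of_int_le_iff[THEN iffD2]) auto
    then show ?thesis by (simp add: A_def)
  qed
  have bd: "\<forall>t\<in>{0..R}. \<bar>f M t\<bar> \<le> Bd"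
  proof
    fix t assume t: "t \<in> {0..R}"
    have "\<bar>f M t\<bar> \<le> (\<Sum>q\<in>I. \<bar>real_of_int (a q) * lam q ^ M * exp (lam q * t)\<bar>)"
      unfolding f_def by (rule sum_abs)
    also have "\<dots> \<le> (\<Sum>q\<in>I. A * W ^ M * exp (W * R))"
    proof (rule sum_mono)
      fix q assume q: "q \<in> I"
      have l: "0 \<le> lam q" "lam q \<le> W" using lamb[OF q] by auto
      have "lam q * t \<le> W * R" using l t by (intro mult_mono) auto
      then have ex: "exp (lam q * t) \<le> exp (W * R)" by simp
      have pw: "lam q ^ M \<le> W ^ M" using l by (intro power_mono) auto
      have "\<bar>real_of_int (a q) * lam q ^ M * exp (lam q * t)\<bar> = \<bar>real_of_int (a q)\<bar> * lam q ^ M * exp (lam q * t)"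
        using l by (simp add: abs_mult)
      also have "\<dots> \<le> A * W ^ M * exp (W * R)"
        using aA[OF q] pw ex l by (intro mult_mono) auto
      finally show "\<bar>real_of_int (a q) * lam q ^ M * exp (lam q * t)\<bar> \<le> A * W ^ M * exp (W * R)" .
    qed
    also have "\<dots> = Bd" by (simp add: Bd_def)
    finally show "\<bar>f M t\<bar> \<le> Bd" .
  qed
  have Z0: "finite (\<zeta> ` box S0)" "\<zeta> ` box S0 \<subseteq> {0..R}" "\<forall>z\<in>\<zeta> ` box S0. f 0 z = 0" "card (\<zeta> ` box S0) = M"
  proof -
    show "finite (\<zeta> ` box S0)" using fbox by simp
    show "card (\<zeta> ` box S0) = M" using card_image[OF inj\<zeta>] cardbox by (simp add: M_def S0_def power_mult[symmetric])
    show "\<zeta> ` box S0 \<subseteq> {0..R}"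
    proof
      fix z assume "z \<in> \<zeta> ` box S0"
      then obtain s where s: "s \<in> box S0" "z = \<zeta> s" by auto
      have "3 * real S0 * L \<le> 3 * real S1 * L" using L0 by (simp add: S0_def S1_def)
      then show "z \<in> {0..R}" using \<zeta>range[OF s(1)] s(2) by (simp add: R_def)
    qed
    show "\<forall>z\<in>\<zeta> ` box S0. f 0 z = 0"
    proof
      fix z assume "z \<in> \<zeta> ` box S0"
      then obtain s where s: "s \<in> box S0" "z = \<zeta> s" by auto
      have "real (dn s) * f 0 z = 0" using intval[of s] a_eq s by simp
      then show "f 0 z = 0" using dnpos[of s] by simp
    qed
  qed
  have final: "real H ^ (12 * K * S1) * (R ^ M / fact M * Bd) < 1"
    using big_ineq[OF n H2 c(1)] E
    unfolding Bd_def A_def W_def R_def cardI K_def S0_def S1_def M_def L_def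
    by simp
  have van1: "f 0 (\<zeta> s) = 0" if s: "s \<in> box S1" for s
  proof -
    have zr: "\<zeta> s \<in> {0..R}" using \<zeta>range[OF s] by (simp add: R_def)
    have f0: "\<bar>f 0 (\<zeta> s)\<bar> \<le> R ^ M / fact M * Bd"
      by (rule interp[OF der Z0 bd zr])
    have "\<bar>real (dn s) * f 0 (\<zeta> s)\<bar> \<le> real H ^ (12 * K * S1) * (R ^ M / fact M * Bd)"
    proof -
      have "real (dn s) \<le> real H ^ (12 * K * S1)" using key3[OF s] by (simp flip: of_nat_power)
      then show ?thesis unfolding abs_mult using f0 by (intro mult_mono) auto
    qed
    then have "\<bar>real (dn s) * f 0 (\<zeta> s)\<bar> < 1" using final by (rule order_le_less_trans)
    then have "\<bar>real_of_int (\<Sum>q\<in>I. int (bco s q) * a q)\<bar> < 1" by (simp only: intval)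
    then have "(\<Sum>q\<in>I. int (bco s q) * a q) = 0" by linarith
    then have "real (dn s) * f 0 (\<zeta> s) = 0" using intval[of s] by simp
    then show ?thesis using dnpos[of s] by simp
  qed
  have injlam: "inj_on lam I"
  proof (rule inj_onI)
    fix q1 q2 assume q: "q1 \<in> I" "q2 \<in> I" "lam q1 = lam q2"
    obtain k1 l1 k2 l2 where qq: "q1 = (k1, l1)" "q2 = (k2, l2)" by fastforce
    have eq: "real k1 + real l1 * c = real k2 + real l2 * c" using q(3) by (simp add: qq lam_def)
    show "q1 = q2"
    proof (cases "l1 = l2")
      case True
      then show ?thesis using eq qq by simp
    next
      case False
      then have "real l1 - real l2 \<noteq> 0" by simp
      then have "c = (real k2 - real k1) / (real l1 - real l2)" using eq by (simp add: field_simps)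
      then have "c \<in> \<rat>" by simp
      then show ?thesis using c(2) by simp
    qed
  qed
  have "card (\<zeta> ` box S1) < card I"
  proof (rule exp_zeros[OF fI injlam, of "\<lambda>q. real_of_int (a q)"])
    show "\<exists>i\<in>I. real_of_int (a i) \<noteq> 0" using a_nz by simp
    show "finite (\<zeta> ` box S1)" using fbox by simp
    show "\<forall>z\<in>\<zeta> ` box S1. (\<Sum>i\<in>I. real_of_int (a i) * exp (lam i * z)) = 0"
      using van1 by (auto simp: f_def)
  qed
  moreover have "card (\<zeta> ` box S1) = 8 * n^6"
    using card_image[OF inj\<zeta>] cardbox by (simp add: S1_def power_mult_distrib power_mult[symmetric])
  moreover have "card I = 4 * n^6" by (simp add: cardI K_def power_mult_distrib power_mult[symmetric])
  ultimately show False by simp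
qed

lemma rat_case:
  fixes c :: real and p q :: nat
  assumes c: "c > 0" "c \<in> \<rat>" "c \<notin> \<int>" and pq: "prime p" "prime q" "p \<noteq> q"
  shows "(real p / real q) powr c \<notin> \<rat>"
proof
  assume r: "(real p / real q) powr c \<in> \<rat>"
  obtain a b :: int where ab: "b > 0" "coprime a b" "c = of_int a / of_int b"
    using Rats_cases'[OF c(2)] by blast
  have a0: "a > 0" using c(1) ab by (simp add: zero_less_divide_iff)
  have b1: "b \<noteq> 1" using c(3) ab by auto
  define A where "A = nat a"
  define B where "B = nat b"
  have aA: "a = int A" "b = int B" using a0 ab by (auto simp: A_def B_def)
  have cop: "coprime A B" using ab(2) aA by simp
  have B1: "B \<noteq> 1" using b1 aA by simp
  have B0: "B > 0" using ab aA by simp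
  have pq0: "real p > 0" "real q > 0" using pq by (auto simp: prime_gt_0_nat)
  define x where "x = real p / real q"
  have x0: "x > 0" using pq0 by (simp add: x_def)
  obtain m n :: nat where mn: "n \<noteq> 0" "\<bar>x powr c\<bar> = real m / real n"
    using Rats_abs_nat_div_natE[OF r[folded x_def]] by blast
  have xc: "x powr c = real m / real n" using mn x0 by simp
  have "x powr c \<noteq> 0" using x0 by simp
  then have m0: "m \<noteq> 0" using xc by auto
  have "(real m / real n) ^ B = x ^ A"
  proof -
    have "(x powr c) ^ B = (x powr c) powr real B" using x0 by (simp add: powr_realpow)
    also have "\<dots> = x powr (c * real B)" by (simp add: powr_powr)
    also have "c * real B = real A" using ab aA B0 by simp
    also have "x powr real A = x ^ A" using x0 by (simp add: powr_realpow)
    finally show ?thesis using xc by simp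
  qed
  then have "real m ^ B / real n ^ B = real p ^ A / real q ^ A" by (simp add: x_def power_divide)
  then have "real m ^ B * real q ^ A = real p ^ A * real n ^ B"
    using mn pq0 by (simp add: field_simps)
  then have eqn: "m ^ B * q ^ A = p ^ A * n ^ B"
    by (metis of_nat_eq_iff of_nat_mult of_nat_power)
  have pe: "prime_elem p" using pq by simp
  have q0: "q \<noteq> 0" using pq by auto
  have "multiplicity p (m ^ B * q ^ A) = B * multiplicity p m"
    using pe m0 q0 prime_multiplicity_other[OF pq]
    by (simp add: prime_elem_multiplicity_mult_distrib prime_elem_multiplicity_power_distrib)
  moreover have "multiplicity p (p ^ A * n ^ B) = A + B * multiplicity p n"
    using pe mn(1) pq by (simp add: prime_elem_multiplicity_mult_distrib prime_elem_multiplicity_power_distrib)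
  ultimately have "B * multiplicity p m = A + B * multiplicity p n" using eqn by simp
  then have "A = B * (multiplicity p m - multiplicity p n)" by (simp add: diff_mult_distrib2)
  then have "B dvd A" by simp
  then have "B = 1" using cop by (metis coprime_common_divisor_nat dvd_refl)
  then show False using B1 by simp
qed

lemma pair_norm:
  fixes c :: real and p q :: nat
  assumes pq: "prime p" "prime q" "p \<noteq> q" and r: "(real p / real q) powr c \<in> \<rat>"
  shows "\<exists>U V. 0 < U \<and> 0 < V \<and> (real (max p q) / real (min p q)) powr c = real U / real V"
proof -
  have pq0: "real p > 0" "real q > 0" using pq by (auto simp: prime_gt_0_nat)
  have r': "(real (max p q) / real (min p q)) powr c \<in> \<rat>"
  proof (cases "p < q")
    case True
    then have "(real (max p q) / real (min p q)) powr c = inverse ((real p / real q) powr c)"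
      using pq0 by (simp add: powr_divide max_def min_def)
    then show ?thesis using r by simp
  next
    case False
    then show ?thesis using r by (simp add: max_def min_def)
  qed
  have pos: "(real (max p q) / real (min p q)) powr c > 0" using pq0 by (simp add: max_def min_def)
  obtain m n :: nat where mn: "n \<noteq> 0" "\<bar>(real (max p q) / real (min p q)) powr c\<bar> = real m / real n"
    using Rats_abs_nat_div_natE[OF r'] by blast
  then have "(real (max p q) / real (min p q)) powr c = real m / real n" using pos by simp
  moreover have "m \<noteq> 0" using calculation pos by (metis less_irrefl of_nat_0 div_0)
  ultimately show ?thesis using mn by (intro exI[of _ m] exI[of _ n]) auto
qed

lemma indep3:
  fixes P Q :: "nat \<Rightarrow> nat"
  assumes pr: "\<And>j. j < 3 \<Longrightarrow> prime (P j) \<and> prime (Q j)"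
    and d1: "\<And>i j. i < 3 \<Longrightarrow> j < 3 \<Longrightarrow> P i \<noteq> Q j"
    and d2: "\<And>i j. i < 3 \<Longrightarrow> j < 3 \<Longrightarrow> i \<noteq> j \<Longrightarrow> P i \<noteq> P j"
  shows "inj_on (\<lambda>s. \<Sum>j<3. real (s j) * ln (real (P j) / real (Q j))) ({..<3} \<rightarrow>\<^sub>E UNIV)"
proof (rule inj_onI)
  fix s t :: "nat \<Rightarrow> nat"
  assume st: "s \<in> {..<3} \<rightarrow>\<^sub>E UNIV" "t \<in> {..<3} \<rightarrow>\<^sub>E UNIV"
    and eq: "(\<Sum>j<3. real (s j) * ln (real (P j) / real (Q j))) = (\<Sum>j<3. real (t j) * ln (real (P j) / real (Q j)))"
  have P0: "P j > 0" "Q j > 0" if "j < 3" for j using pr[OF that] by (auto simp: prime_gt_0_nat)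
  have ex: "exp (\<Sum>j<3. real (u j) * ln (real (P j) / real (Q j))) =
      (\<Prod>j<3. real (P j) ^ u j) / (\<Prod>j<3. real (Q j) ^ u j)" for u :: "nat \<Rightarrow> nat"
  proof -
    have "exp (\<Sum>j<3. real (u j) * ln (real (P j) / real (Q j))) = (\<Prod>j<3. (real (P j) / real (Q j)) ^ u j)"
      unfolding exp_sum[OF finite_lessThan]
      by (rule prod.cong[OF refl]) (use P0 in \<open>simp add: exp_of_nat_mult\<close>)
    also have "\<dots> = (\<Prod>j<3. real (P j) ^ u j) / (\<Prod>j<3. real (Q j) ^ u j)"
      by (simp add: power_divide prod_dividef)
    finally show ?thesis .
  qed
  define N where "N u v = (\<Prod>j<3. P j ^ u j) * (\<Prod>j<3. Q j ^ v j)" for u v :: "nat \<Rightarrow> nat"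
  have NN: "N s t = N t s"
  proof -
    have "(\<Prod>j<3. real (P j) ^ s j) / (\<Prod>j<3. real (Q j) ^ s j) = (\<Prod>j<3. real (P j) ^ t j) / (\<Prod>j<3. real (Q j) ^ t j)"
      using arg_cong[OF eq, of exp] ex by simp
    moreover have "(\<Prod>j<3. real (Q j) ^ u j) \<noteq> 0" for u :: "nat \<Rightarrow> nat" using P0 by simp
    ultimately have "(\<Prod>j<3. real (P j) ^ s j) * (\<Prod>j<3. real (Q j) ^ t j) = (\<Prod>j<3. real (P j) ^ t j) * (\<Prod>j<3. real (Q j) ^ s j)"
      by (simp add: field_simps)
    then have "real (N s t) = real (N t s)" by (simp add: N_def)
    then show ?thesis by (simp only: of_nat_eq_iff)
  qed
  have mN: "multiplicity (P i) (N u v) = u i" if i: "i < 3" for i u v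
  proof -
    have pe: "prime_elem (P i)" using pr[OF i] by simp
    have "\<forall>j\<in>{..<3}. P j ^ u j \<noteq> 0" "\<forall>j\<in>{..<3}. Q j ^ v j \<noteq> 0" using P0 by simp_all
    then have nz: "0 \<notin> (\<lambda>j. P j ^ u j) ` {..<3}" "0 \<notin> (\<lambda>j. Q j ^ v j) ` {..<3}" by (metis (no_types, lifting) imageE)+
    have "multiplicity (P i) (\<Prod>j<3. P j ^ u j) = (\<Sum>j<3. multiplicity (P i) (P j ^ u j))"
      using prime_elem_multiplicity_prod_distrib[OF pe nz(1)] by simp
    also have "\<dots> = (\<Sum>j<3. if j = i then u j else 0)"
    proof (rule sum.cong[OF refl])
      fix j assume "j \<in> {..<(3::nat)}"
      then have j: "j < 3" by simp
      show "multiplicity (P i) (P j ^ u j) = (if j = i then u j else 0)"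
        using pe P0[OF j] prime_multiplicity_other[of "P i" "P j"] pr[OF i] pr[OF j] d2[OF i j]
        by (auto simp: prime_elem_multiplicity_power_distrib)
    qed
    also have "\<dots> = u i" using i by simp
    finally have m1: "multiplicity (P i) (\<Prod>j<3. P j ^ u j) = u i" .
    have "multiplicity (P i) (\<Prod>j<3. Q j ^ v j) = (\<Sum>j<3. multiplicity (P i) (Q j ^ v j))"
      using prime_elem_multiplicity_prod_distrib[OF pe nz(2)] by simp
    also have "\<dots> = (\<Sum>j<(3::nat). (0::nat))"
    proof (rule sum.cong[OF refl])
      fix j assume "j \<in> {..<(3::nat)}"
      then have j: "j < 3" by simp
      show "multiplicity (P i) (Q j ^ v j) = 0"
        using pe P0[OF j] prime_multiplicity_other[of "P i" "Q j"] pr[OF i] pr[OF j] d1[OF i j]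
        by (auto simp: prime_elem_multiplicity_power_distrib)
    qed
    finally have m2: "multiplicity (P i) (\<Prod>j<3. Q j ^ v j) = 0" by simp
    have "(\<Prod>j<3. P j ^ u j) \<noteq> 0" "(\<Prod>j<3. Q j ^ v j) \<noteq> 0" using P0 by auto
    then show ?thesis unfolding N_def using m1 m2 pe by (simp add: prime_elem_multiplicity_mult_distrib)
  qed
  show "s = t"
  proof (rule PiE_ext[OF st])
    fix i assume "i \<in> {..<(3::nat)}"
    then have i: "i < 3" by simp
    show "s i = t i" using mN[OF i, of s t] mN[OF i, of t s] NN by simp
  qed
qed

theorem lemma3:
  fixes c :: real
  assumes "c > 0" and "c \<notin> \<int>"
  shows "\<exists>L::real. L > 0 \<and>
           (\<forall>p q :: nat. prime p \<longrightarrow> prime q \<longrightarrow> p \<noteq> q \<longrightarrow>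
              real p > L \<longrightarrow> real q > L \<longrightarrow>
              (real p / real q) powr c \<notin> \<rat>)"
proof (cases "c \<in> \<rat>")
  case True
  show ?thesis by (intro exI[of _ 1]) (use rat_case assms True in auto)
next
  case irr: False
  show ?thesis
  proof (rule ccontr)
    assume neg: "\<not> ?thesis"
    have bad: "\<exists>p q. prime p \<and> prime q \<and> p \<noteq> q \<and> real p > L \<and> real q > L \<and> (real p / real q) powr c \<in> \<rat>"
      if "L > 0" for L :: real
      using neg that by blast
    obtain p1 q1 where b1: "prime p1" "prime q1" "p1 \<noteq> q1" "(real p1 / real q1) powr c \<in> \<rat>"
      using bad[of 1] by auto
    define m1 where "m1 = max p1 q1"
    have m1pos: "real m1 > 0" using b1 by (simp add: m1_def prime_gt_0_nat)
    obtain p2 q2 where b2: "prime p2" "prime q2" "p2 \<noteq> q2" "(real p2 / real q2) powr c \<in> \<rat>"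
      "p2 > m1" "q2 > m1"
      using bad[OF m1pos] by auto
    define m2 where "m2 = max p2 q2"
    have m2pos: "real m2 > 0" using b2 by (simp add: m2_def prime_gt_0_nat)
    obtain p3 q3 where b3: "prime p3" "prime q3" "p3 \<noteq> q3" "(real p3 / real q3) powr c \<in> \<rat>"
      "p3 > m2" "q3 > m2"
      using bad[OF m2pos] by auto
    define P where "P j = (if j = 0 then max p1 q1 else if j = 1 then max p2 q2 else max p3 q3)" for j :: nat
    define Q where "Q j = (if j = 0 then min p1 q1 else if j = 1 then min p2 q2 else min p3 q3)" for j :: nat
    have j3: "j < 3 \<Longrightarrow> j = 0 \<or> j = 1 \<or> j = 2" for j :: nat by auto
    have ex: "\<exists>U V. 0 < U \<and> 0 < V \<and> (real (P j) / real (Q j)) powr c = real U / real V" if "j < 3" for j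
      using j3[OF that] pair_norm[OF b1(1-4)] pair_norm[OF b2(1-4)] pair_norm[OF b3(1-4)]
      by (auto simp: P_def Q_def)
    obtain U V where UV: "\<And>j. j < 3 \<Longrightarrow> 0 < U j \<and> 0 < V j \<and> (real (P j) / real (Q j)) powr c = real (U j) / real (V j)"
      using ex by metis
    have pr: "prime (P j) \<and> prime (Q j)" if "j < 3" for j
      using j3[OF that] b1 b2 b3 by (auto simp: P_def Q_def max_def min_def)
    have PQ: "0 < Q j \<and> Q j < P j" if "j < 3" for j
      using j3[OF that] b1 b2 b3 by (auto simp: P_def Q_def max_def min_def prime_gt_0_nat)
    have m12: "m1 < m2" using b2 by (simp add: m2_def)
    have d1: "P i \<noteq> Q j" if "i < 3" "j < 3" for i j
      using j3[OF that(1)] j3[OF that(2)] b1 b2 b3 m12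
      by (auto simp: P_def Q_def max_def min_def m1_def m2_def)
    have d2: "P i \<noteq> P j" if "i < 3" "j < 3" "i \<noteq> j" for i j
      using j3[OF that(1)] j3[OF that(2)] that(3) b1 b2 b3 m12
      by (auto simp: P_def Q_def max_def min_def m1_def m2_def)
    show False
      using core[OF assms(1) irr PQ UV indep3[OF pr d1 d2]] by simp
  qed
qed

end
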